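(* Let $M$ be a finite set of graphs such that $M\cap\mathcal{S}=\emptyset$. Then there exists an integer $r\ge3$ such that $\mathcal{S}_r\subseteq \mathrm{SiFree}(M)$.
   Context: All graphs are finite and simple. For graphs $G_1=(V_1,E_1)$, $G_2=(V_2,E_2)$, $G_1\cap G_2=(V_1\cap V_2, E_1\cap E_2)$. For a graph $G=(V,E)$ and an injective map $\alpha$ on $V$, $G^{\alpha}$ has vertex set $\alpha(V)$ and edge set $\{\{\alpha(v),\alpha(w)\}: \{v,w\}\in E\}$. We write $G\xrightarrow{\cap} H$ if $H$ is (isomorphic to) $G^{\alpha_1}\cap\cdots\cap G^{\alpha_k}$ for some $k\ge1$ and injective maps $\alpha_1,\dots,\alpha_k$ on $V(G)$. For a set $M$ of graphs, $\mathrm{SiFree}(M)$ is the class of graphs $G$ such that $G\xrightarrow{\cap}F$ holds for no $F\in M$. $\mathcal{S}$ is the class of forests in which every connected component is a tree with at most three leaves (its members are called tripods). $H_0=K_{1,4}$, and for $k\ge1$, $H_k$ is the graph obtained from two vertex-disjoint copies of the path $P_3$ by joining their middle vertices by a path with $k$ edges (with $k-1$ new internal vertices). For $k\ge3$, $\mathcal{S}_k$ is the class of graphs containing none of $C_3,\dots,C_k,H_0,H_1,\dots,H_k$ as a (not necessarily induced) subgraph. *)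

theory Defs
  imports Main
begin

text \<open>Finite simple graphs with vertices from nat (graphs are considered up to
isomorphism, so the choice of vertex type is immaterial). A graph is a pair (V, E)
with E a set of 2-element subsets of V.\<close>

type_synonym graph = "nat set \<times> nat set set"

definition verts :: "graph \<Rightarrow> nat set" where "verts G = fst G"
definition edges :: "graph \<Rightarrow> nat set set" where "edges G = snd G"

definition is_graph :: "graph \<Rightarrow> bool" where
  "is_graph G \<longleftrightarrow> finite (verts G) \<and>
     (\<forall>e\<in>edges G. \<exists>u v. e = {u, v} \<and> u \<noteq> v \<and> u \<in> verts G \<and> v \<in> verts G)"

definition adj :: "graph \<Rightarrow> nat \<Rightarrow> nat \<Rightarrow> bool" where
  "adj G u v \<longleftrightarrow> {u, v} \<in> edges G \<and> u \<noteq> v"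

definition degree :: "graph \<Rightarrow> nat \<Rightarrow> nat" where
  "degree G v = card {w. adj G v w}"

definition img :: "graph \<Rightarrow> (nat \<Rightarrow> nat) \<Rightarrow> graph" where
  "img G \<alpha> = (\<alpha> ` verts G, (\<lambda>e. \<alpha> ` e) ` edges G)"

definition inter_graphs :: "graph list \<Rightarrow> graph" where
  "inter_graphs gs = ((\<Inter>g\<in>set gs. verts g), (\<Inter>g\<in>set gs. edges g))"

definition isomorphic :: "graph \<Rightarrow> graph \<Rightarrow> bool" where
  "isomorphic G H \<longleftrightarrow> (\<exists>f. bij_betw f (verts G) (verts H) \<and>
     (\<forall>u\<in>verts G. \<forall>v\<in>verts G. {u, v} \<in> edges G \<longleftrightarrow> {f u, f v} \<in> edges H))"

definition inter_to :: "graph \<Rightarrow> graph \<Rightarrow> bool" where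
  "inter_to G H \<longleftrightarrow> (\<exists>\<alpha>s. \<alpha>s \<noteq> [] \<and> (\<forall>\<alpha>\<in>set \<alpha>s. inj_on \<alpha> (verts G)) \<and>
      isomorphic (inter_graphs (map (img G) \<alpha>s)) H)"

definition SiFree :: "graph set \<Rightarrow> graph set" where
  "SiFree M = {G. is_graph G \<and> (\<forall>F\<in>M. \<not> inter_to G F)}"

definition has_cycle :: "graph \<Rightarrow> bool" where
  "has_cycle G \<longleftrightarrow> (\<exists>vs. length vs \<ge> 3 \<and> distinct vs \<and> set vs \<subseteq> verts G \<and>
      (\<forall>i. Suc i < length vs \<longrightarrow> adj G (vs ! i) (vs ! Suc i)) \<and>
      adj G (last vs) (hd vs))"

definition is_forest :: "graph \<Rightarrow> bool" where
  "is_forest G \<longleftrightarrow> is_graph G \<and> \<not> has_cycle G"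

definition component :: "graph \<Rightarrow> nat \<Rightarrow> nat set" where
  "component G v = {w. (adj G)\<^sup>*\<^sup>* v w}"

definition tripod :: "graph \<Rightarrow> bool" where
  "tripod G \<longleftrightarrow> is_forest G \<and>
     (\<forall>v\<in>verts G. card {w \<in> component G v. degree G w = 1} \<le> 3)"

definition contains :: "graph \<Rightarrow> graph \<Rightarrow> bool" where
  "contains G H \<longleftrightarrow> (\<exists>f. inj_on f (verts H) \<and> f ` verts H \<subseteq> verts G \<and>
      (\<forall>u\<in>verts H. \<forall>v\<in>verts H. {u, v} \<in> edges H \<longrightarrow> {f u, f v} \<in> edges G))"

definition cycle_graph :: "nat \<Rightarrow> graph" where
  "cycle_graph n = ({0..<n}, {{i, (i + 1) mod n} | i. i < n})"

definition star4 :: graph where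
  "star4 = ({0..4}, {{0, i} | i. 1 \<le> i \<and> i \<le> 4})"

definition Hgraph :: "nat \<Rightarrow> graph" where
  "Hgraph k = (if k = 0 then star4 else
     ({0..k+4}, {{i, i + 1} | i. i < k} \<union> {{0, k+1}, {0, k+2}, {k, k+3}, {k, k+4}}))"

definition S_class :: "nat \<Rightarrow> graph set" where
  "S_class k = {G. is_graph G \<and> (\<forall>n. 3 \<le> n \<and> n \<le> k \<longrightarrow> \<not> contains G (cycle_graph n)) \<and>
                   (\<forall>j\<le>k. \<not> contains G (Hgraph j))}"

end

theory Submission
  imports Defs
begin

lemma adj_sym: "adj G u v \<Longrightarrow> adj G v u"
  by (auto simp: adj_def insert_commute)

lemma adj_neq: "adj G u v \<Longrightarrow> u \<noteq> v"
  by (auto simp: adj_def)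

lemma adj_edge: "adj G u v \<Longrightarrow> {u, v} \<in> edges G"
  by (auto simp: adj_def)

lemma adj_verts: "is_graph G \<Longrightarrow> adj G u v \<Longrightarrow> u \<in> verts G \<and> v \<in> verts G"
  unfolding is_graph_def adj_def by (fastforce simp: doubleton_eq_iff)

lemma nbrs_finite: "is_graph G \<Longrightarrow> finite {w. adj G v w}"
proof -
  assume g: "is_graph G"
  have "{w. adj G v w} \<subseteq> verts G" using adj_verts[OF g] by blast
  moreover have "finite (verts G)" using g by (simp add: is_graph_def)
  ultimately show ?thesis by (rule finite_subset)
qed

lemma degree_pos_verts: "is_graph G \<Longrightarrow> 0 < degree G v \<Longrightarrow> v \<in> verts G"
  unfolding degree_def using adj_verts
  by (metis card.empty empty_Collect_eq less_irrefl)

lemma deg_ge2: "is_graph G \<Longrightarrow> adj G v a \<Longrightarrow> adj G v b \<Longrightarrow> a \<noteq> b \<Longrightarrow> 2 \<le> degree G v"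
proof -
  assume g: "is_graph G" and h: "adj G v a" "adj G v b" "a \<noteq> b"
  have "{a, b} \<subseteq> {w. adj G v w}" using h by auto
  then have "card {a, b} \<le> degree G v" unfolding degree_def using nbrs_finite[OF g] card_mono by blast
  then show ?thesis using h by simp
qed

lemma deg_ge3: "is_graph G \<Longrightarrow> adj G v a \<Longrightarrow> adj G v b \<Longrightarrow> adj G v c \<Longrightarrow> a \<noteq> b \<Longrightarrow> a \<noteq> c \<Longrightarrow> b \<noteq> c \<Longrightarrow> 3 \<le> degree G v"
proof -
  assume g: "is_graph G" and h: "adj G v a" "adj G v b" "adj G v c" "a \<noteq> b" "a \<noteq> c" "b \<noteq> c"
  have "{a, b, c} \<subseteq> {w. adj G v w}" using h by auto
  then have "card {a, b, c} \<le> degree G v" unfolding degree_def using nbrs_finite[OF g] card_mono by blast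
  then show ?thesis using h by simp
qed

lemma four_elems: "4 \<le> card A \<Longrightarrow> \<exists>a b c d. a \<in> A \<and> b \<in> A \<and> c \<in> A \<and> d \<in> A \<and> distinct [a,b,c,d]"
proof -
  assume "4 \<le> card A"
  then have h: "Suc (Suc (Suc (Suc 0))) \<le> card A" by simp
  obtain a B where 1: "A = insert a B" "a \<notin> B" "Suc (Suc (Suc 0)) \<le> card B"
    using card_le_Suc_iff[THEN iffD1, OF h] by blast
  obtain b C where 2: "B = insert b C" "b \<notin> C" "Suc (Suc 0) \<le> card C"
    using card_le_Suc_iff[THEN iffD1, OF 1(3)] by blast
  obtain c D where 3: "C = insert c D" "c \<notin> D" "Suc 0 \<le> card D"
    using card_le_Suc_iff[THEN iffD1, OF 2(3)] by blast
  obtain d E where 4: "D = insert d E" "d \<notin> E"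
    using card_le_Suc_iff[THEN iffD1, OF 3(3)] by blast
  have m: "a \<in> A" "b \<in> A" "c \<in> A" "d \<in> A" using 1 2 3 4 by simp_all
  have "a \<noteq> b" "a \<noteq> c" "a \<noteq> d" using 1 2 3 4 by simp_all
  moreover have "b \<noteq> c" "b \<noteq> d" using 2 3 4 by simp_all
  moreover have "c \<noteq> d" using 3 4 by simp_all
  ultimately have "distinct [a,b,c,d]" by simp
  with m show ?thesis by blast
qed
lemma two_elems: "2 \<le> card A \<Longrightarrow> \<exists>a b. a \<in> A \<and> b \<in> A \<and> a \<noteq> b"
proof -
  assume "2 \<le> card A"
  then have h: "Suc (Suc 0) \<le> card A" by simp
  obtain a B where 1: "A = insert a B" "a \<notin> B" "Suc 0 \<le> card B"
    using card_le_Suc_iff[THEN iffD1, OF h] by blast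
  obtain b C where 2: "B = insert b C" "b \<notin> C"
    using card_le_Suc_iff[THEN iffD1, OF 1(3)] by blast
  show ?thesis using 1 2 by blast
qed

lemma rtranclp_sym: "(adj G)\<^sup>*\<^sup>* u v \<Longrightarrow> (adj G)\<^sup>*\<^sup>* v u"
proof (induction rule: rtranclp_induct)
  case base then show ?case by simp
next
  case (step y z)
  have "adj G z y" using step(2) by (rule adj_sym)
  then show ?case using step(3) by (rule converse_rtranclp_into_rtranclp)
qed

definition walk :: "graph \<Rightarrow> (nat \<Rightarrow> nat) \<Rightarrow> nat \<Rightarrow> bool" where
  "walk G p k \<longleftrightarrow> (\<forall>i<k. adj G (p i) (p (Suc i)))"

lemma rtranclp_walk: "(adj G)\<^sup>*\<^sup>* u w \<Longrightarrow> \<exists>p k. walk G p k \<and> p 0 = u \<and> p k = w"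
proof (induction rule: rtranclp_induct)
  case base
  show ?case by (rule exI[of _ "\<lambda>_. u"], rule exI[of _ 0]) (simp add: walk_def)
next
  case (step y z)
  then obtain p k where p: "walk G p k" "p 0 = u" "p k = y" by blast
  let ?q = "p(Suc k := z)"
  have W: "walk G ?q (Suc k)" unfolding walk_def
  proof (intro allI impI)
    fix i assume i: "i < Suc k"
    show "adj G (?q i) (?q (Suc i))"
    proof (cases "i < k")
      case True
      then have "?q i = p i" "?q (Suc i) = p (Suc i)" by auto
      then show ?thesis using p(1) True unfolding walk_def by simp
    next
      case False
      then have "i = k" using i by simp
      then have "?q i = y" "?q (Suc i) = z" using p(3) by auto
      then show ?thesis using step(2) by simp
    qed
  qed
  have E: "?q 0 = u" "?q (Suc k) = z" using p by auto
  show ?case by (rule exI[of _ ?q], rule exI[of _ "Suc k"]) (intro conjI W E)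
qed

lemma walk_rtranclp: "walk G p k \<Longrightarrow> i \<le> k \<Longrightarrow> (adj G)\<^sup>*\<^sup>* (p 0) (p i)"
proof (induction i)
  case 0 then show ?case by simp
next
  case (Suc i)
  then have "i < k" by simp
  then have a: "adj G (p i) (p (Suc i))" using Suc.prems(1) unfolding walk_def by blast
  have "(adj G)\<^sup>*\<^sup>* (p 0) (p i)" using Suc.IH Suc.prems \<open>i < k\<close> by simp
  then show ?case using a by (rule rtranclp.rtrancl_into_rtrancl)
qed

definition shortest :: "graph \<Rightarrow> (nat \<Rightarrow> nat) \<Rightarrow> nat \<Rightarrow> bool" where
  "shortest G p k \<longleftrightarrow> walk G p k \<and> (\<forall>q m. walk G q m \<and> q 0 = p 0 \<and> q m = p k \<longrightarrow> k \<le> m)"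

lemma shortest_exists: "(adj G)\<^sup>*\<^sup>* u w \<Longrightarrow> \<exists>p k. shortest G p k \<and> p 0 = u \<and> p k = w"
proof -
  assume "(adj G)\<^sup>*\<^sup>* u w"
  define P where "P = (\<lambda>k. \<exists>p. walk G p k \<and> p 0 = u \<and> p k = w)"
  have "\<exists>k. P k" unfolding P_def using rtranclp_walk[OF \<open>(adj G)\<^sup>*\<^sup>* u w\<close>] by blast
  then have "\<exists>k. P k \<and> (\<forall>m<k. \<not> P m)" by (rule exists_least_iff[THEN iffD1])
  then obtain k where k: "P k" and min: "\<And>m. m < k \<Longrightarrow> \<not> P m" by blast
  from k obtain p where p: "walk G p k" "p 0 = u" "p k = w" unfolding P_def by blast
  have "shortest G p k" unfolding shortest_def
  proof (intro conjI allI impI)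
    fix q m assume q: "walk G q m \<and> q 0 = p 0 \<and> q m = p k"
    then have "P m" unfolding P_def using p by auto
    then show "k \<le> m" using min not_le by blast
  qed (rule p(1))
  then show ?thesis using p by blast
qed

lemma shortest_inj:
  assumes "shortest G p k" "i < j" "j \<le> k"
  shows "p i \<noteq> p j"
proof
  assume eq: "p i = p j"
  define q where "q = (\<lambda>m. if m \<le> i then p m else p (m + (j - i)))"
  have w: "walk G p k" using assms(1) by (simp add: shortest_def)
  have "walk G q (k - (j - i))" unfolding walk_def
  proof (intro allI impI)
    fix m assume m: "m < k - (j - i)"
    show "adj G (q m) (q (Suc m))"
    proof (cases "m < i")
      case True then show ?thesis using w assms unfolding q_def walk_def by auto
    next
      case False
      show ?thesis
      proof (cases "m = i")
        case True
        then have "q m = p j" "q (Suc m) = p (Suc j)" using eq assms(2) unfolding q_def by auto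
        then show ?thesis using w m assms True unfolding walk_def by auto
      next
        case False
        then have "q m = p (m + (j - i))" "q (Suc m) = p (Suc (m + (j - i)))" using \<open>\<not> m < i\<close> unfolding q_def by auto
        then show ?thesis using w m assms unfolding walk_def by auto
      qed
    qed
  qed
  moreover have "q 0 = p 0" unfolding q_def by simp
  moreover have "q (k - (j - i)) = p k" unfolding q_def using assms eq by (cases "k = j") auto
  ultimately have "k \<le> k - (j - i)" using assms(1) unfolding shortest_def by blast
  then show False using assms by auto
qed

lemma shortest_chord:
  assumes "shortest G p k" "i < j" "j \<le> k" "adj G (p i) (p j)"
  shows "j = Suc i"
proof (rule ccontr)
  assume ne: "j \<noteq> Suc i"
  define q where "q = (\<lambda>m. if m \<le> i then p m else p (m + (j - i - 1)))"
  have w: "walk G p k" using assms(1) by (simp add: shortest_def)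
  have "walk G q (k - (j - i - 1))" unfolding walk_def
  proof (intro allI impI)
    fix m assume m: "m < k - (j - i - 1)"
    show "adj G (q m) (q (Suc m))"
    proof (cases "m < i")
      case True then show ?thesis using w assms unfolding q_def walk_def by auto
    next
      case False
      show ?thesis
      proof (cases "m = i")
        case True
        then have "q m = p i" "q (Suc m) = p j" using assms unfolding q_def by auto
        then show ?thesis using assms by auto
      next
        case False
        then have "q m = p (m + (j - i - 1))" "q (Suc m) = p (Suc (m + (j - i - 1)))" using \<open>\<not> m < i\<close> unfolding q_def by auto
        then show ?thesis using w m assms unfolding walk_def by auto
      qed
    qed
  qed
  moreover have "q 0 = p 0" unfolding q_def by simp
  moreover have "q (k - (j - i - 1)) = p k" unfolding q_def using assms by auto
  ultimately have "k \<le> k - (j - i - 1)" using assms(1) unfolding shortest_def by blast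
  then show False using assms ne by auto
qed

lemma containsI:
  assumes "inj_on f (verts H)" "f ` verts H \<subseteq> verts G" "\<And>e. e \<in> edges H \<Longrightarrow> f ` e \<in> edges G"
  shows "contains G H"
  unfolding contains_def
proof (intro exI[of _ f] conjI ballI impI)
  fix u v assume "{u, v} \<in> edges H"
  then have "f ` {u, v} \<in> edges G" by (rule assms(3))
  then show "{f u, f v} \<in> edges G" by simp
qed (use assms in auto)

lemma contains_trans:
  assumes "contains G F" "contains F H"
  shows "contains G H"
proof -
  obtain f where f: "inj_on f (verts F)" "f ` verts F \<subseteq> verts G"
    "\<forall>u\<in>verts F. \<forall>v\<in>verts F. {u, v} \<in> edges F \<longrightarrow> {f u, f v} \<in> edges G"
    using assms(1) unfolding contains_def by blast
  obtain g where g: "inj_on g (verts H)" "g ` verts H \<subseteq> verts F"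
    "\<forall>u\<in>verts H. \<forall>v\<in>verts H. {u, v} \<in> edges H \<longrightarrow> {g u, g v} \<in> edges F"
    using assms(2) unfolding contains_def by blast
  have "inj_on (f \<circ> g) (verts H)"
    using g(1) inj_on_subset[OF f(1) g(2)] by (rule comp_inj_on)
  moreover have "(f \<circ> g) ` verts H \<subseteq> verts G" using f(2) g(2) by auto
  moreover have "\<forall>u\<in>verts H. \<forall>v\<in>verts H. {u, v} \<in> edges H \<longrightarrow> {(f \<circ> g) u, (f \<circ> g) v} \<in> edges G"
  proof (intro ballI impI)
    fix u v assume uv: "u \<in> verts H" "v \<in> verts H" "{u, v} \<in> edges H"
    then have "{g u, g v} \<in> edges F" using g(3) by blast
    moreover have "g u \<in> verts F" "g v \<in> verts F" using uv g(2) by auto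
    ultimately show "{(f \<circ> g) u, (f \<circ> g) v} \<in> edges G" using f(3) by simp
  qed
  ultimately show ?thesis unfolding contains_def by blast
qed

lemma contains_card:
  assumes "finite (verts G)" "contains G H"
  shows "card (verts H) \<le> card (verts G)"
proof -
  obtain f where f: "inj_on f (verts H)" "f ` verts H \<subseteq> verts G"
    using assms(2) unfolding contains_def by blast
  show ?thesis using card_inj_on_le[OF f assms(1)] .
qed

lemma inter_contains:
  assumes g: "is_graph G" and it: "inter_to G F"
  shows "contains G F"
proof -
  obtain \<alpha>s where ne: "\<alpha>s \<noteq> []" and inj: "\<forall>\<alpha>\<in>set \<alpha>s. inj_on \<alpha> (verts G)"
    and iso: "isomorphic (inter_graphs (map (img G) \<alpha>s)) F"
    using it unfolding inter_to_def by blast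
  define H where "H = inter_graphs (map (img G) \<alpha>s)"
  define \<alpha> where "\<alpha> = hd \<alpha>s"
  have \<alpha>in: "\<alpha> \<in> set \<alpha>s" unfolding \<alpha>_def using ne by simp
  have ia: "inj_on \<alpha> (verts G)" using inj \<alpha>in by blast
  have imgin: "img G \<alpha> \<in> set (map (img G) \<alpha>s)" using \<alpha>in by simp
  have vH: "verts H \<subseteq> \<alpha> ` verts G"
  proof -
    have "verts H = (\<Inter>g\<in>set (map (img G) \<alpha>s). verts g)" unfolding H_def inter_graphs_def verts_def by simp
    also have "\<dots> \<subseteq> verts (img G \<alpha>)" using imgin by (rule INT_lower)
    also have "\<dots> = \<alpha> ` verts G" unfolding img_def verts_def by simp
    finally show ?thesis .
  qed
  have eH: "edges H \<subseteq> (\<lambda>e. \<alpha> ` e) ` edges G"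
  proof -
    have "edges H = (\<Inter>g\<in>set (map (img G) \<alpha>s). edges g)" unfolding H_def inter_graphs_def edges_def by simp
    also have "\<dots> \<subseteq> edges (img G \<alpha>)" using imgin by (rule INT_lower)
    also have "\<dots> = (\<lambda>e. \<alpha> ` e) ` edges G" unfolding img_def edges_def by simp
    finally show ?thesis .
  qed
  obtain \<phi> where bij: "bij_betw \<phi> (verts H) (verts F)"
    and E: "\<forall>u\<in>verts H. \<forall>v\<in>verts H. {u, v} \<in> edges H \<longleftrightarrow> {\<phi> u, \<phi> v} \<in> edges F"
    using iso unfolding isomorphic_def H_def by blast
  have surj: "\<phi> ` verts H = verts F" using bij by (rule bij_betw_imp_surj_on)
  define \<psi>1 where "\<psi>1 = inv_into (verts H) \<phi>"
  define \<psi>2 where "\<psi>2 = inv_into (verts G) \<alpha>"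
  have p1in: "\<psi>1 w \<in> verts H \<and> \<phi> (\<psi>1 w) = w" if w: "w \<in> verts F" for w
  proof -
    have "w \<in> \<phi> ` verts H" using surj w by simp
    then show ?thesis unfolding \<psi>1_def by (intro conjI inv_into_into f_inv_into_f)
  qed
  have p2in: "\<psi>2 x \<in> verts G \<and> \<alpha> (\<psi>2 x) = x" if x: "x \<in> verts H" for x
  proof -
    have "x \<in> \<alpha> ` verts G" using vH x by blast
    then show ?thesis unfolding \<psi>2_def by (intro conjI inv_into_into f_inv_into_f)
  qed
  have inj1: "inj_on \<psi>1 (verts F)" unfolding \<psi>1_def by (rule inj_on_inv_into) (simp add: surj)
  have inj2: "inj_on \<psi>2 (verts H)" unfolding \<psi>2_def using vH by (rule inj_on_inv_into)
  have sub1: "\<psi>1 ` verts F \<subseteq> verts H" using p1in by blast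
  show ?thesis
    unfolding contains_def
  proof (intro exI[of _ "\<psi>2 \<circ> \<psi>1"] conjI ballI impI)
    show "inj_on (\<psi>2 \<circ> \<psi>1) (verts F)" using inj1 inj_on_subset[OF inj2 sub1] by (rule comp_inj_on)
    show "(\<psi>2 \<circ> \<psi>1) ` verts F \<subseteq> verts G" using p1in p2in by auto
  next
    fix u v assume u: "u \<in> verts F" and v: "v \<in> verts F" and uv: "{u, v} \<in> edges F"
    define u' where "u' = \<psi>1 u"
    define v' where "v' = \<psi>1 v"
    have u': "u' \<in> verts H" "\<phi> u' = u" using p1in[OF u] unfolding u'_def by auto
    have v': "v' \<in> verts H" "\<phi> v' = v" using p1in[OF v] unfolding v'_def by auto
    have "{\<phi> u', \<phi> v'} \<in> edges F" using uv u'(2) v'(2) by simp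
    then have "{u', v'} \<in> edges H" using E u'(1) v'(1) by blast
    then obtain e where e: "e \<in> edges G" "{u', v'} = \<alpha> ` e" using eH by blast
    have "\<forall>e\<in>edges G. \<exists>a b. e = {a, b} \<and> a \<noteq> b \<and> a \<in> verts G \<and> b \<in> verts G"
      using g unfolding is_graph_def by (rule conjunct2)
    then obtain a b where ab: "e = {a, b}" "a \<in> verts G" "b \<in> verts G" using e(1) by blast
    have esub: "e \<subseteq> verts G" using ab by simp
    define u'' where "u'' = \<psi>2 u'"
    define v'' where "v'' = \<psi>2 v'"
    have u'': "u'' \<in> verts G" "\<alpha> u'' = u'" using p2in[OF u'(1)] unfolding u''_def by auto
    have v'': "v'' \<in> verts G" "\<alpha> v'' = v'" using p2in[OF v'(1)] unfolding v''_def by auto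
    have "\<alpha> ` {u'', v''} = \<alpha> ` e" using u'' v'' e(2) by simp
    moreover have sub: "{u'', v''} \<subseteq> verts G" using u''(1) v''(1) by simp
    ultimately have "{u'', v''} = e" using inj_on_image_eq_iff[OF ia sub esub] by simp
    then have "{u'', v''} \<in> edges G" using e(1) by simp
    then show "{(\<psi>2 \<circ> \<psi>1) u, (\<psi>2 \<circ> \<psi>1) v} \<in> edges G" unfolding u''_def v''_def u'_def v'_def by simp
  qed
qed

lemma cycle_contains:
  assumes "has_cycle F"
  shows "\<exists>n\<ge>3. contains F (cycle_graph n)"
proof -
  obtain vs where vs: "length vs \<ge> 3" "distinct vs" "set vs \<subseteq> verts F"
    "\<forall>i. Suc i < length vs \<longrightarrow> adj F (vs ! i) (vs ! Suc i)" "adj F (last vs) (hd vs)"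
    using assms unfolding has_cycle_def by blast
  define n where "n = length vs"
  have vC: "verts (cycle_graph n) = {0..<n}" unfolding cycle_graph_def verts_def by simp
  have eC: "edges (cycle_graph n) = {{i, (i + 1) mod n} | i. i < n}" unfolding cycle_graph_def edges_def by simp
  have "contains F (cycle_graph n)"
  proof (rule containsI[of "nth vs"])
    show "inj_on (nth vs) (verts (cycle_graph n))" unfolding vC
      using vs(2) by (intro inj_on_nth) (auto simp: n_def)
    show "nth vs ` verts (cycle_graph n) \<subseteq> verts F" unfolding vC using vs(3) nth_mem by (auto simp: n_def)
  next
    fix e assume "e \<in> edges (cycle_graph n)"
    then obtain i where i: "i < n" "e = {i, (i + 1) mod n}" unfolding eC by blast
    then have im: "nth vs ` e = {vs ! i, vs ! ((i + 1) mod n)}" by simp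
    show "nth vs ` e \<in> edges F"
    proof (cases "Suc i < n")
      case True
      then have "(i + 1) mod n = Suc i" by simp
      moreover have "adj F (vs ! i) (vs ! Suc i)" using vs(4) True unfolding n_def by blast
      ultimately show ?thesis using im adj_edge by simp
    next
      case False
      then have ii0: "Suc i = n" using i(1) by simp
      then have ii: "i = n - 1" "(i + 1) mod n = 0" by auto
      have ne: "vs \<noteq> []" using vs(1) by auto
      have "last vs = vs ! i" using ii ne unfolding n_def by (simp add: last_conv_nth)
      moreover have "hd vs = vs ! 0" using ne by (simp add: hd_conv_nth)
      ultimately have "adj F (vs ! i) (vs ! 0)" using vs(5) by simp
      then show ?thesis using im ii adj_edge by simp
    qed
  qed
  then show ?thesis using vs(1) unfolding n_def by blast
qed

lemma star_contains:
  assumes g: "is_graph F" and d: "4 \<le> degree F v"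
  shows "contains F (Hgraph 0)"
proof -
  obtain a b c d where abcd: "adj F v a" "adj F v b" "adj F v c" "adj F v d" "distinct [a,b,c,d]"
    using four_elems[OF d[unfolded degree_def]] by blast
  define xs where "xs = [v,a,b,c,d]"
  have vn: "v \<noteq> a" "v \<noteq> b" "v \<noteq> c" "v \<noteq> d" using abcd adj_neq by blast+
  have dxs: "distinct xs" unfolding xs_def using vn abcd(5) by simp
  have sx: "set xs \<subseteq> verts F" unfolding xs_def using abcd adj_verts[OF g] by auto
  have vS: "verts (Hgraph 0) = {0..4}" unfolding Hgraph_def star4_def verts_def by simp
  have eS: "edges (Hgraph 0) = {{0, i} | i. 1 \<le> i \<and> i \<le> 4}" unfolding Hgraph_def star4_def edges_def by simp
  show ?thesis
  proof (rule containsI[of "nth xs"])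
    show "inj_on (nth xs) (verts (Hgraph 0))" unfolding vS
      using dxs by (intro inj_on_nth) (auto simp: xs_def)
    have len: "length xs = 5" by (simp add: xs_def)
    have "nth xs ` {0..4} \<subseteq> set xs"
    proof
      fix y assume "y \<in> nth xs ` {0..4}"
      then obtain i where i: "i \<in> {0..4}" "y = xs ! i" by blast
      then have "i < length xs" using len by simp
      then show "y \<in> set xs" using i(2) by simp
    qed
    then show "nth xs ` verts (Hgraph 0) \<subseteq> verts F" unfolding vS using sx by blast
  next
    fix e assume "e \<in> edges (Hgraph 0)"
    then obtain i where i: "1 \<le> i" "i \<le> 4" "e = {0, i}" unfolding eS by blast
    have im: "nth xs ` e = {v, xs ! i}" using i(3) by (simp add: xs_def)
    have "i = 1 \<or> i = 2 \<or> i = 3 \<or> i = 4" using i by arith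
    then have "adj F v (xs ! i)" using abcd by (auto simp: xs_def)
    then show "nth xs ` e \<in> edges F" using im adj_edge by simp
  qed
qed

lemma diverge:
  assumes g: "is_graph G" and sp: "shortest G p k" and sq: "shortest G q m"
    and e0: "p 0 = q 0" and e1: "p 1 = q 1" and k1: "1 \<le> k" and km: "k \<le> m" and ne: "p k \<noteq> q m"
  shows "(\<exists>i. 1 \<le> i \<and> i \<le> k \<and> 3 \<le> degree G (p i)) \<or> 2 \<le> degree G (p k)"
proof -
  have wp: "walk G p k" using sp by (simp add: shortest_def)
  have wq: "walk G q m" using sq by (simp add: shortest_def)
  define P where "P = (\<lambda>j. k < j \<or> p j \<noteq> q j)"
  have PS: "P (Suc k)" unfolding P_def by simp
  define J where "J = Least P"
  have PJ: "P J" unfolding J_def using PS by (rule LeastI)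
  have lessJ: "\<And>j. j < J \<Longrightarrow> \<not> P j" unfolding J_def by (rule not_less_Least)
  have JS: "J \<le> Suc k" unfolding J_def using PS by (rule Least_le)
  have "\<not> P 0" unfolding P_def using e0 by simp
  moreover have "\<not> P 1" unfolding P_def using e1 k1 by simp
  ultimately have "J \<noteq> 0" "J \<noteq> 1" using PJ by (metis, metis One_nat_def)
  then have J2: "2 \<le> J" by arith
  have agree: "\<And>j. j < J \<Longrightarrow> j \<le> k \<and> p j = q j" using lessJ unfolding P_def by force
  show ?thesis
  proof (cases "J \<le> k")
    case True
    then have pq: "p J \<noteq> q J" using PJ unfolding P_def by simp
    define i where "i = J - 1"
    have iJ: "J = Suc i" "1 \<le> i" unfolding i_def using J2 by auto
    have xi: "p i = q i" using agree[of i] iJ by simp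
    have xi1: "p (i - 1) = q (i - 1)" using agree[of "i - 1"] iJ by simp
    have "i - 1 < k" "Suc (i - 1) = i" using iJ True by auto
    then have a1: "adj G (p (i - 1)) (p i)" using wp unfolding walk_def by metis
    have a2: "adj G (p i) (p J)" using wp iJ True unfolding walk_def by simp
    have a3: "adj G (q i) (q J)" using wq iJ True km unfolding walk_def by simp
    have d1: "p (i - 1) \<noteq> p J" using shortest_inj[OF sp, of "i - 1" J] iJ True by simp
    have d2: "q (i - 1) \<noteq> q J" using shortest_inj[OF sq, of "i - 1" J] iJ True km by simp
    have "3 \<le> degree G (p i)"
      using deg_ge3[OF g adj_sym[OF a1] a2, of "q J"] a3 xi d1 d2 xi1 pq by simp
    then show ?thesis using iJ True by auto
  next
    case False
    then have JS': "J = Suc k" using JS by simp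
    have agk: "\<And>j. j \<le> k \<Longrightarrow> p j = q j" using agree JS' by simp
    have "k \<noteq> m" using ne agk[of k] by auto
    then have km': "k < m" using km by simp
    have pk: "p k = q k" using agk by simp
    have "k - 1 < m" "Suc (k - 1) = k" using k1 km by auto
    then have b1: "adj G (q (k - 1)) (q k)" using wq unfolding walk_def by metis
    have b2: "adj G (q k) (q (Suc k))" using wq km' unfolding walk_def by simp
    have d: "q (k - 1) \<noteq> q (Suc k)" using shortest_inj[OF sq, of "k - 1" "Suc k"] km' by simp
    have "2 \<le> degree G (q k)" using deg_ge2[OF g adj_sym[OF b1] b2 d] .
    then show ?thesis using pk by simp
  qed
qed

lemma leaf_bound:
  assumes g: "is_graph G"
    and S: "\<forall>s\<in>S. (adj G)\<^sup>*\<^sup>* r s \<and> s \<noteq> r \<and> degree G s \<le> 1"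
    and D: "\<forall>x. (adj G)\<^sup>*\<^sup>* r x \<and> x \<noteq> r \<longrightarrow> degree G x \<le> 2"
  shows "card S \<le> degree G r"
proof -
  have "\<forall>s\<in>S. \<exists>pk. shortest G (fst pk) (snd pk) \<and> fst pk 0 = r \<and> fst pk (snd pk) = s"
  proof
    fix s assume "s \<in> S"
    then have "(adj G)\<^sup>*\<^sup>* r s" using S by blast
    then have "\<exists>p k. shortest G p k \<and> p 0 = r \<and> p k = s" by (rule shortest_exists)
    then obtain p k where "shortest G p k \<and> p 0 = r \<and> p k = s" by blast
    then show "\<exists>pk. shortest G (fst pk) (snd pk) \<and> fst pk 0 = r \<and> fst pk (snd pk) = s"
      by (intro exI[of _ "(p, k)"]) simp
  qed
  then have "\<exists>f. \<forall>s\<in>S. shortest G (fst (f s)) (snd (f s)) \<and> fst (f s) 0 = r \<and> fst (f s) (snd (f s)) = s"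
    by (rule bchoice)
  then obtain f where f: "\<forall>s\<in>S. shortest G (fst (f s)) (snd (f s)) \<and> fst (f s) 0 = r \<and> fst (f s) (snd (f s)) = s" ..
  define P where "P = (\<lambda>s. fst (f s))"
  define K where "K = (\<lambda>s. snd (f s))"
  have PK: "\<And>s. s \<in> S \<Longrightarrow> shortest G (P s) (K s) \<and> P s 0 = r \<and> P s (K s) = s"
    using f unfolding P_def K_def by blast
  have K1: "\<And>s. s \<in> S \<Longrightarrow> 1 \<le> K s"
  proof (rule ccontr)
    fix s assume s: "s \<in> S" "\<not> 1 \<le> K s"
    then have "K s = 0" by simp
    then have "s = r" using PK[OF s(1)] by simp
    then show False using S s(1) by blast
  qed
  define h where "h = (\<lambda>s. P s 1)"
  have hN: "h ` S \<subseteq> {w. adj G r w}"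
  proof
    fix w assume "w \<in> h ` S"
    then obtain s where s: "s \<in> S" "w = P s 1" unfolding h_def by blast
    have "walk G (P s) (K s)" using PK[OF s(1)] by (simp add: shortest_def)
    then have "adj G (P s 0) (P s (Suc 0))" using K1[OF s(1)] unfolding walk_def by simp
    then show "w \<in> {w. adj G r w}" using PK[OF s(1)] s(2) by simp
  qed
  have key: "False" if s: "s \<in> S" "s' \<in> S" "s \<noteq> s'" "h s = h s'" "K s \<le> K s'" for s s'
  proof -
    have sp: "shortest G (P s) (K s)" "P s 0 = r" "P s (K s) = s" using PK[OF s(1)] by auto
    have sq: "shortest G (P s') (K s')" "P s' 0 = r" "P s' (K s') = s'" using PK[OF s(2)] by auto
    have "(\<exists>i. 1 \<le> i \<and> i \<le> K s \<and> 3 \<le> degree G (P s i)) \<or> 2 \<le> degree G (P s (K s))"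
      using diverge[OF g sp(1) sq(1)] sp sq s K1[OF s(1)] unfolding h_def by simp
    then show False
    proof
      assume "\<exists>i. 1 \<le> i \<and> i \<le> K s \<and> 3 \<le> degree G (P s i)"
      then obtain i where i: "1 \<le> i" "i \<le> K s" "3 \<le> degree G (P s i)" by blast
      have w: "walk G (P s) (K s)" using sp(1) by (simp add: shortest_def)
      have "(adj G)\<^sup>*\<^sup>* r (P s i)" using walk_rtranclp[OF w i(2)] sp(2) by simp
      moreover have "P s i \<noteq> r" using shortest_inj[OF sp(1), of 0 i] i sp(2) by simp
      ultimately have "degree G (P s i) \<le> 2" using D by blast
      then show False using i(3) by simp
    next
      assume "2 \<le> degree G (P s (K s))"
      then show False using S s(1) sp(3) by auto
    qed
  qed
  have "inj_on h S"
  proof (rule inj_onI)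
    fix s s' assume "s \<in> S" "s' \<in> S" "h s = h s'"
    then show "s = s'"
    proof (cases "K s \<le> K s'")
      case True
      then show ?thesis using key[of s s'] \<open>s \<in> S\<close> \<open>s' \<in> S\<close> \<open>h s = h s'\<close> by blast
    next
      case False
      then show ?thesis using key[of s' s] \<open>s \<in> S\<close> \<open>s' \<in> S\<close> \<open>h s = h s'\<close> by force
    qed
  qed
  then have "card S \<le> card {w. adj G r w}" using hN nbrs_finite[OF g] by (rule card_inj_on_le)
  then show ?thesis by (simp add: degree_def)
qed

lemma has_cycle3:
  assumes g: "is_graph G" and a: "adj G x y" "adj G y z" "adj G z x"
  shows "has_cycle G"
proof -
  have d: "x \<noteq> y" "y \<noteq> z" "z \<noteq> x" using a adj_neq by blast+
  have s: "set [x, y, z] \<subseteq> verts G" using adj_verts[OF g a(1)] adj_verts[OF g a(2)] by simp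
  have c: "\<forall>i. Suc i < length [x, y, z] \<longrightarrow> adj G ([x, y, z] ! i) ([x, y, z] ! Suc i)"
  proof (intro allI impI)
    fix i assume "Suc i < length [x, y, z]"
    then have "i = 0 \<or> i = 1" by auto
    then show "adj G ([x, y, z] ! i) ([x, y, z] ! Suc i)" using a by auto
  qed
  show ?thesis unfolding has_cycle_def
    by (rule exI[of _ "[x, y, z]"]) (use d s c a(3) in simp)
qed

lemma has_cycle4:
  assumes g: "is_graph G" and a: "adj G x y" "adj G y z" "adj G z w" "adj G w x"
    and n: "x \<noteq> z" "y \<noteq> w"
  shows "has_cycle G"
proof -
  have d: "x \<noteq> y" "y \<noteq> z" "z \<noteq> w" "w \<noteq> x" using a adj_neq by blast+
  have s: "set [x, y, z, w] \<subseteq> verts G" using adj_verts[OF g a(1)] adj_verts[OF g a(3)] by simp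
  have c: "\<forall>i. Suc i < length [x, y, z, w] \<longrightarrow> adj G ([x, y, z, w] ! i) ([x, y, z, w] ! Suc i)"
  proof (intro allI impI)
    fix i assume "Suc i < length [x, y, z, w]"
    then have "i = 0 \<or> i = 1 \<or> i = 2" by auto
    then show "adj G ([x, y, z, w] ! i) ([x, y, z, w] ! Suc i)" using a by auto
  qed
  show ?thesis unfolding has_cycle_def
    by (rule exI[of _ "[x, y, z, w]"]) (use d n s c a(4) in simp)
qed

lemma Hgraph_card: "j \<le> card (verts (Hgraph j))"
proof (cases "j = 0")
  case True then show ?thesis by simp
next
  case False
  then have "verts (Hgraph j) = {0..j+4}" unfolding Hgraph_def verts_def by simp
  then show ?thesis by simp
qed

lemma cycle_card: "card (verts (cycle_graph n)) = n"
  unfolding cycle_graph_def verts_def by simp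

lemma H_or_cycle:
  assumes g: "is_graph G" and rxy: "(adj G)\<^sup>*\<^sup>* x y" and xy: "x \<noteq> y"
    and dx: "3 \<le> degree G x" and dy: "3 \<le> degree G y"
  shows "has_cycle G \<or> (\<exists>j. contains G (Hgraph j))"
proof -
  have "\<exists>p k. shortest G p k \<and> p 0 = x \<and> p k = y" using rxy by (rule shortest_exists)
  then obtain p k where sp: "shortest G p k" and p0: "p 0 = x" and pk: "p k = y" by blast
  have w: "walk G p k" using sp by (simp add: shortest_def)
  have k0: "k \<noteq> 0"
  proof
    assume "k = 0"
    then have "p k = p 0" by simp
    then show False using p0 pk xy by simp
  qed
  have ax: "adj G x (p 1)" using w k0 p0 unfolding walk_def by auto
  have "k - 1 < k" "Suc (k - 1) = k" using k0 by auto
  then have "adj G (p (k - 1)) y" using w pk unfolding walk_def by metis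
  then have ay: "adj G y (p (k - 1))" by (rule adj_sym)
  have fx: "finite {w. adj G x w}" using nbrs_finite[OF g] .
  have fy: "finite {w. adj G y w}" using nbrs_finite[OF g] .
  have "card ({w. adj G x w} - {p 1}) = card {w. adj G x w} - 1"
    using ax by (intro card_Diff_singleton) simp
  then have "2 \<le> card ({w. adj G x w} - {p 1})" using dx unfolding degree_def by simp
  then obtain a1 a2 where a: "adj G x a1" "adj G x a2" "a1 \<noteq> p 1" "a2 \<noteq> p 1" "a1 \<noteq> a2"
    using two_elems by blast
  have "card ({w. adj G y w} - {p (k - 1)}) = card {w. adj G y w} - 1"
    using ay by (intro card_Diff_singleton) simp
  then have "2 \<le> card ({w. adj G y w} - {p (k - 1)})" using dy unfolding degree_def by simp
  then obtain b1 b2 where b: "adj G y b1" "adj G y b2" "b1 \<noteq> p (k - 1)" "b2 \<noteq> p (k - 1)" "b1 \<noteq> b2"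
    using two_elems by blast
  have A: "a \<noteq> p j" if "adj G x a" "a \<noteq> p 1" "j \<le> k" for a j
  proof
    assume aj: "a = p j"
    show False
    proof (cases "j = 0")
      case True then show False using aj that(1) p0 adj_neq by blast
    next
      case False
      have "j \<noteq> 1" using aj that(2) by auto
      moreover have "adj G (p 0) (p j)" using that(1) aj p0 by simp
      ultimately show False using shortest_chord[OF sp, of 0 j] False that(3) by simp
    qed
  qed
  have B: "b \<noteq> p j" if "adj G y b" "b \<noteq> p (k - 1)" "j \<le> k" for b j
  proof
    assume bj: "b = p j"
    show False
    proof (cases "j = k")
      case True then show False using bj that(1) pk adj_neq by blast
    next
      case False
      have "j \<noteq> k - 1" using bj that(2) by auto
      moreover have "adj G (p j) (p k)" using that(1) bj pk adj_sym by blast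
      ultimately show False using shortest_chord[OF sp, of j k] False that(3) by simp
    qed
  qed
  show ?thesis
  proof (cases "\<exists>c. adj G x c \<and> c \<noteq> p 1 \<and> adj G y c \<and> c \<noteq> p (k - 1)")
    case True
    then obtain c where c: "adj G x c" "c \<noteq> p 1" "adj G y c" "c \<noteq> p (k - 1)" by blast
    have "has_cycle G"
    proof (cases "k = 1")
      case True
      then have "adj G x y" using ax pk by simp
      then show ?thesis using has_cycle3[OF g _ c(3) adj_sym[OF c(1)]] by simp
    next
      case k1: False
      show ?thesis
      proof (cases "k = 2")
        case True
        then have "adj G (p 1) y" using w pk unfolding walk_def by (metis One_nat_def lessI numeral_2_eq_2)
        moreover have "x \<noteq> y" using xy .
        moreover have "p 1 \<noteq> c" using c(2) by simp
        ultimately show ?thesis using has_cycle4[OF g ax _ c(3) adj_sym[OF c(1)]] by simp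
      next
        case False
        then have k3: "3 \<le> k" using k0 k1 by simp
        define q where "q = (\<lambda>i::nat. if i = 0 then x else if i = 1 then c else y)"
        have "walk G q 2" unfolding walk_def
        proof (intro allI impI)
          fix i :: nat assume "i < 2"
          then have "i = 0 \<or> i = 1" by auto
          then show "adj G (q i) (q (Suc i))" unfolding q_def using c(1) adj_sym[OF c(3)] by auto
        qed
        moreover have "q 0 = p 0" "q 2 = p k" unfolding q_def using p0 pk by auto
        ultimately have "k \<le> 2" using sp unfolding shortest_def by blast
        then show ?thesis using k3 by simp
      qed
    qed
    then show ?thesis by simp
  next
    case False
    then have ab: "a1 \<noteq> b1" "a1 \<noteq> b2" "a2 \<noteq> b1" "a2 \<noteq> b2" using a b by blast+
    define ys where "ys = [a1, a2, b1, b2]"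
    have dys: "distinct ys" unfolding ys_def using a(5) b(5) ab by simp
    have ysp: "\<And>z j. z \<in> set ys \<Longrightarrow> j \<le> k \<Longrightarrow> z \<noteq> p j"
      unfolding ys_def using A[OF a(1) a(3)] A[OF a(2) a(4)] B[OF b(1) b(3)] B[OF b(2) b(4)] by auto
    have pinj: "i = j" if "i \<le> k" "j \<le> k" "p i = p j" for i j
    proof (rule ccontr)
      assume "i \<noteq> j"
      then have "i < j \<or> j < i" by arith
      then show False using shortest_inj[OF sp, of i j] shortest_inj[OF sp, of j i] that by auto
    qed
    define f where "f = (\<lambda>i. if i \<le> k then p i else ys ! (i - Suc k))"
    have vH: "verts (Hgraph k) = {0..k+4}" unfolding Hgraph_def verts_def using k0 by simp
    have eH: "edges (Hgraph k) = {{i, i + 1} | i. i < k} \<union> {{0, k+1}, {0, k+2}, {k, k+3}, {k, k+4}}"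
      unfolding Hgraph_def edges_def using k0 by simp
    have pv: "p i \<in> verts G" if "i \<le> k" for i
    proof (cases "i < k")
      case True
      then have "adj G (p i) (p (Suc i))" using w unfolding walk_def by blast
      then show ?thesis using adj_verts[OF g] by blast
    next
      case False
      then have "i = k" using that by simp
      then show ?thesis using ay adj_verts[OF g] pk by blast
    qed
    have ysv: "set ys \<subseteq> verts G" unfolding ys_def using a b adj_verts[OF g] by auto
    have "contains G (Hgraph k)"
    proof (rule containsI[of f])
      show "inj_on f (verts (Hgraph k))" unfolding vH
      proof (rule inj_onI)
        fix i j assume i: "i \<in> {0..k+4}" and j: "j \<in> {0..k+4}" and fij: "f i = f j"
        show "i = j"
        proof (cases "i \<le> k")
          case ik: True
          show ?thesis
          proof (cases "j \<le> k")
            case True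
            then show ?thesis using pinj[OF ik True] fij ik unfolding f_def by simp
          next
            case False
            then have "j - Suc k < length ys" using j unfolding ys_def by auto
            then have "ys ! (j - Suc k) \<in> set ys" by (rule nth_mem)
            then have "ys ! (j - Suc k) \<noteq> p i" using ysp ik by blast
            then show ?thesis using fij ik False unfolding f_def by simp
          qed
        next
          case ik: False
          show ?thesis
          proof (cases "j \<le> k")
            case True
            have "i - Suc k < length ys" using i ik unfolding ys_def by auto
            then have "ys ! (i - Suc k) \<in> set ys" by (rule nth_mem)
            then have "ys ! (i - Suc k) \<noteq> p j" using ysp True by blast
            then show ?thesis using fij ik True unfolding f_def by simp
          next
            case False
            have "i - Suc k < length ys" "j - Suc k < length ys" using i j ik False unfolding ys_def by auto
            moreover have "ys ! (i - Suc k) = ys ! (j - Suc k)" using fij ik False unfolding f_def by simp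
            ultimately have "i - Suc k = j - Suc k" using dys nth_eq_iff_index_eq by blast
            then show ?thesis using ik False by simp
          qed
        qed
      qed
      show "f ` verts (Hgraph k) \<subseteq> verts G" unfolding vH
      proof
        fix z assume "z \<in> f ` {0..k+4}"
        then obtain i where i: "i \<in> {0..k+4}" "z = f i" by blast
        show "z \<in> verts G"
        proof (cases "i \<le> k")
          case True then show ?thesis using pv i unfolding f_def by simp
        next
          case False
          then have "i - Suc k < length ys" using i unfolding ys_def by auto
          then have "ys ! (i - Suc k) \<in> set ys" by (rule nth_mem)
          then show ?thesis using ysv i False unfolding f_def by auto
        qed
      qed
    next
      fix e assume "e \<in> edges (Hgraph k)"
      then have "(\<exists>i. i < k \<and> e = {i, i + 1}) \<or> e = {0, k+1} \<or> e = {0, k+2} \<or> e = {k, k+3} \<or> e = {k, k+4}"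
        unfolding eH by blast
      then show "f ` e \<in> edges G"
      proof (elim disjE exE conjE)
        fix i assume i: "i < k" "e = {i, i + 1}"
        then have "f ` e = {p i, p (Suc i)}" unfolding f_def by simp
        moreover have "adj G (p i) (p (Suc i))" using w i(1) unfolding walk_def by blast
        ultimately show ?thesis using adj_edge by simp
      next
        assume "e = {0, k+1}"
        then have "f ` e = {x, a1}" unfolding f_def ys_def using p0 by (simp add: insert_commute)
        then show ?thesis using adj_edge[OF a(1)] by simp
      next
        assume "e = {0, k+2}"
        then have "f ` e = {x, a2}" unfolding f_def ys_def using p0 by (simp add: insert_commute)
        then show ?thesis using adj_edge[OF a(2)] by simp
      next
        assume "e = {k, k+3}"
        then have "f ` e = {y, b1}" unfolding f_def ys_def using pk by (simp add: insert_commute)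
        then show ?thesis using adj_edge[OF b(1)] by simp
      next
        assume "e = {k, k+4}"
        then have "f ` e = {y, b2}" unfolding f_def ys_def using pk by (simp add: insert_commute)
        then show ?thesis using adj_edge[OF b(2)] by simp
      qed
    qed
    then show ?thesis by blast
  qed
qed

lemma nontripod:
  assumes g: "is_graph F" and nt: "\<not> tripod F"
  shows "(\<exists>n\<ge>3. contains F (cycle_graph n)) \<or> (\<exists>j. contains F (Hgraph j))"
proof (cases "has_cycle F")
  case True
  then show ?thesis using cycle_contains by blast
next
  case nc: False
  then have "is_forest F" using g unfolding is_forest_def by simp
  then obtain v where v: "v \<in> verts F" and cL: "\<not> card {w \<in> component F v. degree F w = 1} \<le> 3"
    using nt unfolding tripod_def by blast
  define L where "L = {w \<in> component F v. degree F w = 1}"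
  have cL4: "4 \<le> card L" using cL unfolding L_def by simp
  have Lr: "(adj F)\<^sup>*\<^sup>* v w" "degree F w = 1" if "w \<in> L" for w
    using that unfolding L_def component_def by auto
  show ?thesis
  proof (cases "\<exists>w. 4 \<le> degree F w")
    case True
    then obtain w where "4 \<le> degree F w" by blast
    then have "contains F (Hgraph 0)" by (rule star_contains[OF g])
    then show ?thesis by blast
  next
    case False
    have maxd: "degree F w \<le> 3" for w
    proof -
      have "\<not> 4 \<le> degree F w" using False by blast
      then show ?thesis by simp
    qed
    have "L \<noteq> {}" using cL4 by (metis card.empty not_numeral_le_zero)
    then obtain l0 where l0: "l0 \<in> L" by blast
    have rl0: "(adj F)\<^sup>*\<^sup>* l0 v" using Lr(1)[OF l0] by (rule rtranclp_sym)
    have "\<exists>x. (adj F)\<^sup>*\<^sup>* l0 x \<and> x \<noteq> l0 \<and> 3 \<le> degree F x"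
    proof (rule ccontr)
      assume "\<not> ?thesis"
      then have D: "\<forall>x. (adj F)\<^sup>*\<^sup>* l0 x \<and> x \<noteq> l0 \<longrightarrow> degree F x \<le> 2" by auto
      have S: "\<forall>s\<in>L - {l0}. (adj F)\<^sup>*\<^sup>* l0 s \<and> s \<noteq> l0 \<and> degree F s \<le> 1"
      proof
        fix s assume s: "s \<in> L - {l0}"
        have "(adj F)\<^sup>*\<^sup>* l0 s" using rl0 Lr(1)[of s] s by (meson DiffD1 rtranclp_trans)
        then show "(adj F)\<^sup>*\<^sup>* l0 s \<and> s \<noteq> l0 \<and> degree F s \<le> 1" using s Lr(2)[of s] by simp
      qed
      have "card (L - {l0}) \<le> degree F l0" using leaf_bound[OF g S D] .
      moreover have "card (L - {l0}) = card L - 1" using l0 by (rule card_Diff_singleton)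
      ultimately show False using cL4 Lr(2)[OF l0] by simp
    qed
    then obtain x where x: "(adj F)\<^sup>*\<^sup>* l0 x" "x \<noteq> l0" "3 \<le> degree F x" by blast
    have rxv: "(adj F)\<^sup>*\<^sup>* x v" using rtranclp_sym[OF x(1)] rl0 by (rule rtranclp_trans)
    have "\<exists>y. (adj F)\<^sup>*\<^sup>* x y \<and> y \<noteq> x \<and> 3 \<le> degree F y"
    proof (rule ccontr)
      assume "\<not> ?thesis"
      then have D: "\<forall>y. (adj F)\<^sup>*\<^sup>* x y \<and> y \<noteq> x \<longrightarrow> degree F y \<le> 2" by auto
      have S: "\<forall>s\<in>L. (adj F)\<^sup>*\<^sup>* x s \<and> s \<noteq> x \<and> degree F s \<le> 1"
      proof
        fix s assume s: "s \<in> L"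
        have "(adj F)\<^sup>*\<^sup>* x s" using rxv Lr(1)[OF s] by (rule rtranclp_trans)
        moreover have "s \<noteq> x" using Lr(2)[OF s] x(3) by auto
        ultimately show "(adj F)\<^sup>*\<^sup>* x s \<and> s \<noteq> x \<and> degree F s \<le> 1" using Lr(2)[OF s] by simp
      qed
      have "card L \<le> degree F x" using leaf_bound[OF g S D] .
      then show False using cL4 maxd[of x] by simp
    qed
    then obtain y where y: "(adj F)\<^sup>*\<^sup>* x y" "y \<noteq> x" "3 \<le> degree F y" by blast
    have "has_cycle F \<or> (\<exists>j. contains F (Hgraph j))"
      using H_or_cycle[OF g y(1) _ x(3) y(3)] y(2) by metis
    then show ?thesis using cycle_contains by blast
  qed
qed

theorem mainTheorem12:
  assumes "finite M"
    and "\<forall>F\<in>M. is_graph F"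
    and "\<forall>F\<in>M. \<not> tripod F"
  shows "\<exists>r::nat. r \<ge> 3 \<and> S_class r \<subseteq> SiFree M"
proof -
  define r where "r = 3 + (\<Sum>F\<in>M. card (verts F))"
  have cF: "card (verts F) \<le> r" if "F \<in> M" for F
  proof -
    have "card (verts F) \<le> (\<Sum>F\<in>M. card (verts F))"
      using member_le_sum[of F M "\<lambda>F. card (verts F)"] that assms(1) by simp
    then show ?thesis unfolding r_def by simp
  qed
  have "S_class r \<subseteq> SiFree M"
  proof
    fix G assume G: "G \<in> S_class r"
    have gG: "is_graph G" using G unfolding S_class_def by simp
    have C: "\<And>n. 3 \<le> n \<Longrightarrow> n \<le> r \<Longrightarrow> \<not> contains G (cycle_graph n)" using G unfolding S_class_def by simp
    have Hs: "\<And>j. j \<le> r \<Longrightarrow> \<not> contains G (Hgraph j)" using G unfolding S_class_def by simp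
    have "\<not> inter_to G F" if F: "F \<in> M" for F
    proof
      assume "inter_to G F"
      then have cGF: "contains G F" using inter_contains[OF gG] by blast
      have gF: "is_graph F" using assms(2) F by blast
      have fin: "finite (verts F)" using gF unfolding is_graph_def by simp
      have "(\<exists>n\<ge>3. contains F (cycle_graph n)) \<or> (\<exists>j. contains F (Hgraph j))"
        using nontripod[OF gF] assms(3) F by blast
      then show False
      proof
        assume "\<exists>n\<ge>3. contains F (cycle_graph n)"
        then obtain n where n: "3 \<le> n" "contains F (cycle_graph n)" by blast
        have "n \<le> card (verts F)" using contains_card[OF fin n(2)] cycle_card[of n] by simp
        then have "n \<le> r" using cF[OF F] by simp
        moreover have "contains G (cycle_graph n)" using cGF n(2) by (rule contains_trans)
        ultimately show False using C n(1) by blast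
      next
        assume "\<exists>j. contains F (Hgraph j)"
        then obtain j where j: "contains F (Hgraph j)" by blast
        have "j \<le> card (verts F)" using contains_card[OF fin j] Hgraph_card[of j] by simp
        then have "j \<le> r" using cF[OF F] by simp
        moreover have "contains G (Hgraph j)" using cGF j by (rule contains_trans)
        ultimately show False using Hs by blast
      qed
    qed
    then show "G \<in> SiFree M" unfolding SiFree_def using gG by blast
  qed
  moreover have "3 \<le> r" unfolding r_def by simp
  ultimately show ?thesis by blast
qed

end
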